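(* Let $0=t_0<\dots<t_N=T$, $\tau_k=t_k-t_{k-1}$, $r_k=\tau_k/\tau_{k-1}$ ($2\le k\le N$). Let $r_{\max}\approx4.8645$ be the positive root of $x^3=(2x+1)^2$, fix $\delta\in(0,r_{\max})$, assume $r_2>0$ and $0<r_k\le r_{\max}-\delta$ for $3\le k\le N$, and set $C_r=\sqrt{r_{\max}}/(1+r_{\max})^2$. Let $\mathcal V_h$ be the space of grid functions $v=(v_0,\dots,v_M)$ with $v_0=v_M=0$, with $\Delta_hv_i=(v_{i+1}-2v_i+v_{i-1})/h^2$, $\nabla_hv_i=(v_{i+1}-v_{i-1})/(2h)$, $\langle u,v\rangle=\sum_{i=1}^{M-1}hu_iv_i$, $\|u\|=\sqrt{\langle u,u\rangle}$. Then for any $\epsilon>0$, any $2\le n\le N$ and any $u^k\in\mathcal V_h$ ($1\le k\le n$), $$2\sum_{k=2}^n\sum_{j=2}^k\theta^{(k)}_{k-j}\langle-\Delta_hu^j,u^k\rangle+\frac{\epsilon^2}{C_r\delta}\sum_{k=2}^n\tau_k\|u^k\|^2\ge2\epsilon\sum_{k=2}^n\sum_{j=2}^k\theta^{(k)}_{k-j}\langle\nabla_hu^j,u^k\rangle.$$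
   Context: BDF2 kernels: $b^{(1)}_0=1/\tau_1$; for $n\ge2$, $b^{(n)}_0=\frac{1+2r_n}{\tau_n(1+r_n)}$, $b^{(n)}_1=-\frac{r_n^2}{\tau_n(1+r_n)}$, $b^{(n)}_j=0$ for $2\le j\le n-1$. DOC kernels $\theta^{(n)}_{n-j}$ ($1\le j\le n$) are defined by $\sum_{j=k}^n\theta^{(n)}_{n-j}b^{(j)}_{j-k}=\delta_{nk}$ for all $1\le k\le n$. *)

theory Defs
  imports "HOL-Analysis.Analysis"
begin

definition tau :: "(nat \<Rightarrow> real) \<Rightarrow> nat \<Rightarrow> real" where
  "tau t k = t k - t (k - 1)"

definition ratio :: "(nat \<Rightarrow> real) \<Rightarrow> nat \<Rightarrow> real" where
  "ratio t k = tau t k / tau t (k - 1)"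

text \<open>BDF2 kernels b^{(n)}_j (only meaningful for n >= 1).\<close>
definition bdf2 :: "(nat \<Rightarrow> real) \<Rightarrow> nat \<Rightarrow> nat \<Rightarrow> real" where
  "bdf2 t n j =
     (if n = 1 then (if j = 0 then 1 / tau t 1 else 0)
      else if j = 0 then (1 + 2 * ratio t n) / (tau t n * (1 + ratio t n))
      else if j = 1 then - ((ratio t n)^2) / (tau t n * (1 + ratio t n))
      else 0)"

definition r_max :: real where
  "r_max = (THE x. x > 0 \<and> x ^ 3 = (2 * x + 1) ^ 2)"

definition C_r :: real where
  "C_r = sqrt r_max / (1 + r_max) ^ 2"

definition lap_h :: "real \<Rightarrow> (nat \<Rightarrow> real) \<Rightarrow> nat \<Rightarrow> real" where
  "lap_h h v i = (v (i + 1) - 2 * v i + v (i - 1)) / h ^ 2"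

definition grad_h :: "real \<Rightarrow> (nat \<Rightarrow> real) \<Rightarrow> nat \<Rightarrow> real" where
  "grad_h h v i = (v (i + 1) - v (i - 1)) / (2 * h)"

definition ip_h :: "real \<Rightarrow> nat \<Rightarrow> (nat \<Rightarrow> real) \<Rightarrow> (nat \<Rightarrow> real) \<Rightarrow> real" where
  "ip_h h M u v = (\<Sum>i = 1..M - 1. h * u i * v i)"

definition norm_h :: "real \<Rightarrow> nat \<Rightarrow> (nat \<Rightarrow> real) \<Rightarrow> real" where
  "norm_h h M u = sqrt (ip_h h M u u)"

end

theory Submission
  imports Defs
begin

lemma R_exists: "\<exists>R::real. 2.2 \<le> R \<and> R \<le> 2.21 \<and> R^3 = 2*R^2+1"
proof -
  have "\<exists>x. 2.2 \<le> x \<and> x \<le> 2.21 \<and> (\<lambda>x::real. x^3 - 2*x^2 - 1) x = 0"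
    by (rule IVT') (auto intro!: continuous_intros simp: power3_eq_cube power2_eq_square)
  then show ?thesis by auto
qed

lemma rmax_facts: "\<exists>R::real. 2.2 \<le> R \<and> R \<le> 2.21 \<and> R^3 = 2*R^2+1 \<and> r_max = R^2 \<and> C_r = R/(1+R^2)^2"
proof -
  obtain R :: real where R: "2.2 \<le> R" "R \<le> 2.21" "R^3 = 2*R^2+1" using R_exists by blast
  have root_gt4: "x > 4" if "x > 0" "x^3 = (2*x+1)^2" for x :: real
  proof (rule ccontr)
    assume "\<not> x > 4"
    then have "x^3 \<le> 4*x^2" using that(1) by (simp add: power3_eq_cube power2_eq_square mult_right_mono)
    then show False using that by (simp add: power2_eq_square algebra_simps)
  qed
  have yroot: "(R^2)^3 = (2*R^2+1)^2" by (metis R(3) power_mult power_mult_distrib  mult.commute  power2_eq_square power3_eq_cube numeral_times_numeral semiring_norm(12) num_double)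
  have "r_max = R^2" unfolding r_max_def
  proof (rule the_equality)
    show "R^2 > 0 \<and> (R^2)^3 = (2*R^2+1)^2" using R yroot by simp
  next
    fix x :: real assume x: "x > 0 \<and> x^3 = (2*x+1)^2"
    have x4: "x > 4" using root_gt4 x by blast
    have y4: "R^2 > 4" using root_gt4 yroot R by simp
    define y where "y = R^2"
    have "(x - y) * (x^2 + x*y + y^2 - 4*x - 4*y - 4) = 0"
      using x yroot unfolding y_def[symmetric] by (simp add: algebra_simps power2_eq_square power3_eq_cube)
    moreover have "x^2 + x*y + y^2 - 4*x - 4*y - 4 > 0"
    proof -
      have "x^2 > 4*x" using x4 by (simp add: power2_eq_square)
      moreover have "y^2 > 4*y" using y4 unfolding y_def[symmetric] by (simp add: power2_eq_square)
      moreover have "x*y > 4*4" using x4 y4 unfolding y_def by (intro mult_strict_mono) auto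
      ultimately show ?thesis by linarith
    qed
    ultimately show "x = R^2" unfolding y_def by simp
  qed
  moreover have "C_r = R/(1+R^2)^2" unfolding C_r_def calculation using R by simp
  ultimately show ?thesis using R by blast
qed
lemma aux_lin: "0 \<le> (p::real) \<Longrightarrow> 22/10*(2/10) \<le> q \<Longrightarrow> 0 \<le> w \<Longrightarrow> (2873/10000)*(1+w) \<le> 2*(w+p+q)"
  by (simp add: algebra_simps)

lemma consts_key:
  fixes R \<delta> s c F :: real
  assumes R1: "2.2 \<le> R" and R2: "R \<le> 2.21" and R3: "R^3 = 2*R^2+1"
    and d1: "0 < \<delta>" and d2: "\<delta> < R^2"
    and s_def: "s = R^2 - \<delta>" and c_def: "c = R/(1+R^2)^2 * \<delta>" and F_def: "F = s * sqrt s/(1+s)"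
  shows "c > 0" "0 \<le> F" "c + F \<le> 2"
    "\<And>r. 0 < r \<Longrightarrow> r \<le> s \<Longrightarrow> c + F \<le> 2*(1+2*r)/(1+r) - r * sqrt r/(1+r)"
    "\<And>\<rho>. 0 < \<rho> \<Longrightarrow> \<rho> \<le> s \<Longrightarrow> \<rho> * sqrt \<rho>/(1+\<rho>) \<le> F"
proof -
  define C where "C = R/(1+R^2)^2"
  define a where "a = sqrt s"
  have s0: "0 < s" using d2 unfolding s_def by simp
  have a0: "0 < a" using s0 unfolding a_def by simp
  have ap: "1 + a^2 > 0" by (metis add_pos_nonneg zero_less_one zero_le_power2)
  have sa: "s = a^2" unfolding a_def using s0 by simp
  have aR: "a < R"
  proof -
    have "s < R^2" unfolding s_def using d1 by simp
    then have "a^2 < R^2" using sa by simp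
    then show ?thesis by (rule power_less_imp_less_base) (use R1 in simp)
  qed
  have "2.2*2.2 \<le> R*R" using R1 by (intro mult_mono) auto
  then have Rsq1: "4.84 \<le> R^2" by (simp add: power2_eq_square)
  have "R*R \<le> 2.21*2.21" using R1 R2 by (intro mult_mono) auto
  then have Rsq2: "R^2 \<le> 4.8841" by (simp add: power2_eq_square)
  have R2pos: "0 < 1 + R^2" by (metis add_pos_nonneg zero_less_one zero_le_power2)
  have C0: "C > 0" unfolding C_def using R1 R2pos by simp
  have C1: "C \<le> 0.065"
  proof -
    have "5.84*5.84 \<le> (1+R^2)*(1+R^2)" using Rsq1 by (intro mult_mono) auto
    then have "34.1056 \<le> (1+R^2)^2" by (simp add: power2_eq_square)
    then have "0.065 * (1+R^2)^2 \<ge> R" using R2 by (simp; linarith)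
    then show ?thesis unfolding C_def using R2pos by (simp add: field_simps)
  qed
  have cdef: "c = C * (R^2 - a^2)" unfolding c_def C_def using sa s_def by simp
  have Fdef: "F = a^3/(1+a^2)" using a0 unfolding F_def a_def[symmetric] sa by (simp add: power2_eq_square power3_eq_cube)
  show "c > 0" unfolding c_def using C0 d1 unfolding C_def by (intro mult_pos_pos)
  show F0: "0 \<le> F" unfolding Fdef using a0 by simp
  have a3: "a^3 \<le> a^2 * R" using aR a0 by (simp add: power3_eq_cube power2_eq_square)
  have a2R: "a^2*(R-2) \<le> 1"
  proof -
    have "a^2 \<le> R^2" using aR a0 by (simp add: power_mono)
    then have "a^2*(R-2) \<le> R^2*(R-2)" using R1 by (intro mult_right_mono) auto
    also have "\<dots> = 1" using R3 by (simp add: algebra_simps power2_eq_square power3_eq_cube)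
    finally show ?thesis .
  qed
  have amgm: "(R^2-a^2)*(1+a^2) \<le> ((R^2+1)/2)^2"
  proof -
    have "0 \<le> ((R^2-a^2) - (1+a^2))^2" by simp
    then show ?thesis by (simp add: power2_eq_square algebra_simps)
  qed
  have "((R^2+1)/2)^2 \<le> 8.66"
  proof -
    have "(R^2+1)/2 \<le> 2.94205" using Rsq2 by simp
    moreover have "0 \<le> (R^2+1)/2" by simp
    ultimately have "((R^2+1)/2)*((R^2+1)/2) \<le> 2.94205*2.94205" by (intro mult_mono) auto
    then show ?thesis by (simp add: power2_eq_square)
  qed
  with amgm have pq: "(R^2-a^2)*(1+a^2) \<le> 8.66" by linarith
  have pq0: "0 \<le> (R^2-a^2)*(1+a^2)" using aR a0 by (simp add: power_mono)
  have "C * ((R^2-a^2)*(1+a^2)) \<le> 0.065 * 8.66"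
    using C0 C1 pq pq0 by (intro mult_mono) auto
  then have cb: "c*(1+a^2) \<le> 0.6" unfolding cdef by (simp add: algebra_simps)
  have K1': "c*(1+a^2) + a^3 \<le> 2*(1+a^2)" using cb a3 a2R by (simp add: algebra_simps)
  show K1: "c + F \<le> 2"
  proof -
    have "(c + F)*(1+a^2) = c*(1+a^2) + a^3" unfolding Fdef using ap by (simp add: field_simps)
    then have "(c+F)*(1+a^2) \<le> 2*(1+a^2)" using K1' by simp
    then have "(c+F)*(1+a^2) \<le> 2*(1+a^2)" by simp
    then show ?thesis using ap mult_le_cancel_right_pos by blast
  qed
  have condb: "c*(1+a^2) \<le> 2+4*a^2-2*a^3"
  proof -
    have id1: "2+4*a^2-2*a^3 = (R-a) * (2*(a^2 + a*(R-2) + R*(R-2)))"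
      using R3 by (simp add: algebra_simps power2_eq_square power3_eq_cube)
    have id2: "c*(1+a^2) = (R-a) * (C*(R+a)*(1+a^2))"
      unfolding cdef by (simp add: algebra_simps power2_eq_square)
    have "C*(R+a) \<le> 0.065 * 4.42" using C0 C1 aR R2 a0 by (intro mult_mono) auto
    then have X1: "C*(R+a)*(1+a^2) \<le> (2873/10000) * (1+a^2)" by (intro mult_right_mono) auto
    have X2: "a*(R-2) \<ge> 0" using a0 R1 by simp
    have X3: "R*(R-2) \<ge> 2.2*0.2" using R1 by (intro mult_mono) auto
    have X4: "0 \<le> a^2" by simp
    have X5: "(2873/10000) * (1+a^2) \<le> 2*(a^2 + a*(R-2) + R*(R-2))"
      using aux_lin[OF X2 X3 X4] .
    have "C*(R+a)*(1+a^2) \<le> 2*(a^2 + a*(R-2) + R*(R-2))"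
      using X1 X5 by linarith
    then show ?thesis unfolding id1 id2 using aR by (intro mult_left_mono) auto
  qed
  show "c + F \<le> 2*(1+2*r)/(1+r) - r * sqrt r/(1+r)" if r: "0 < r" "r \<le> s" for r
  proof -
    define K where "K = c + F"
    define L where "L = (\<lambda>x. 2+4*x - x*a - K*(1+x))"
    have L0: "L 0 \<ge> 0" unfolding L_def K_def using K1 by simp
    have Ls: "L s \<ge> 0"
    proof -
      have "K*(1+a^2) = c*(1+a^2) + a^3" unfolding K_def Fdef using ap by (simp add: field_simps)
      then show ?thesis unfolding L_def sa using condb by (simp add: algebra_simps power2_eq_square power3_eq_cube)
    qed
    have "L r * s = (s - r) * L 0 + r * L s" unfolding L_def by (simp add: algebra_simps)
    also have "\<dots> \<ge> 0" using L0 Ls r by simp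
    finally have "L r \<ge> 0" using s0 by (simp add: zero_le_mult_iff)
    moreover have "r * sqrt r \<le> r * a" unfolding a_def using r by (intro mult_left_mono) auto
    ultimately have "K*(1+r) \<le> 2*(1+2*r) - r * sqrt r" unfolding L_def by (simp add: algebra_simps)
    then have "K \<le> (2*(1+2*r) - r * sqrt r)/(1+r)" using r by (simp add: field_simps)
    then show ?thesis unfolding K_def by (simp add: diff_divide_distrib)
  qed
  show "\<rho> * sqrt \<rho>/(1+\<rho>) \<le> F" if r: "0 < \<rho>" "\<rho> \<le> s" for \<rho>
  proof -
    have "\<rho>/(1+\<rho>) \<le> s/(1+s)" using r by (simp add: field_simps)
    moreover have "sqrt \<rho> \<le> sqrt s" using r by simp
    ultimately have "\<rho>/(1+\<rho>) * sqrt \<rho> \<le> s/(1+s) * sqrt s" using r s0 by (intro mult_mono) auto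
    then show ?thesis unfolding F_def by (simp add: field_simps)
  qed
qed
definition Dfw :: "(nat \<Rightarrow> real) \<Rightarrow> nat \<Rightarrow> real" where
  "Dfw v i = v (Suc i) - v i"

definition Aform :: "real \<Rightarrow> nat \<Rightarrow> (nat \<Rightarrow> real) \<Rightarrow> (nat \<Rightarrow> real) \<Rightarrow> real" where
  "Aform h M v w = (\<Sum>i<M. Dfw v i * Dfw w i / h)"

lemma sbp_aux:
  "(\<Sum>i=1..m. (d (i-1) - d i) * w i) = (\<Sum>i<Suc m. d i * (w (Suc i) - w i)) - d m * w (Suc m) + d 0 * w (0::nat)" for d w :: "nat \<Rightarrow> real"
  by (induction m) (auto simp: algebra_simps)

lemma sbp:
  assumes h: "h > 0" and w0: "w 0 = 0" and wM: "w M = 0"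
  shows "ip_h h M (\<lambda>i. - lap_h h v i) w = Aform h M v w"
proof (cases M)
  case 0
  then show ?thesis by (simp add: ip_h_def Aform_def)
next
  case (Suc m)
  have "ip_h h M (\<lambda>i. - lap_h h v i) w = (\<Sum>i=1..m. (Dfw v (i-1) - Dfw v i) * w i) / h"
    unfolding ip_h_def Suc diff_Suc_1 sum_divide_distrib
  proof (intro sum.cong refl)
    fix i assume "i \<in> {1..m}"
    then have i: "i \<ge> 1" by simp
    then have "Suc (i - 1) = i" by simp
    then show "h * - lap_h h v i * w i = (Dfw v (i - 1) - Dfw v i) * w i / h"
      using h i unfolding lap_h_def Dfw_def by (simp add: field_simps power2_eq_square)
  qed
  also have "\<dots> = Aform h M v w"
    unfolding sbp_aux Aform_def Suc sum_divide_distrib[symmetric] using w0 wM Suc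
    by (simp add: Dfw_def)
  finally show ?thesis .
qed

lemma shift_sum_le:
  fixes g :: "nat \<Rightarrow> real"
  assumes "\<And>i. g i \<ge> 0"
  shows "(\<Sum>i=1..M-1. g (i-1)) \<le> (\<Sum>i<M. g i)"
proof -
  have e: "(\<Sum>i=1..n. g (i-1)) = (\<Sum>i<n. g i)" for n by (induction n) auto
  have "(\<Sum>i<M-1. g i) \<le> (\<Sum>i<M. g i)" using assms by (intro sum_mono2) auto
  then show ?thesis using e by simp
qed

lemma grad_bound:
  assumes h: "h > 0" and a: "a > 0"
  shows "2 * \<epsilon> * ip_h h M (grad_h h v) u \<le> a * Aform h M v v + \<epsilon>^2 / a * ip_h h M u u"
proof -
  define d where "d = Dfw v"
  have pt: "2 * \<epsilon> * (h * grad_h h v i * u i) \<le> a/(2*h) * ((d i)^2 + (d (i-1))^2) + \<epsilon>^2/a * (h * u i * u i)"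
    if i: "i \<ge> 1" for i
  proof -
    have s: "Suc (i-1) = i" using i by simp
    have g: "2 * \<epsilon> * (h * grad_h h v i * u i) = \<epsilon> * d i * u i + \<epsilon> * d (i-1) * u i"
      unfolding grad_h_def d_def Dfw_def s using h by (simp add: field_simps)
    define T where "T = \<epsilon>^2/a * (h * u i * u i)"
    have amgm: "\<epsilon> * x * y \<le> a/(2*h) * x^2 + \<epsilon>^2/a * (h * y * y)/2" for x y :: real
    proof -
      have "0 \<le> (a*x - \<epsilon>*h*y)^2 / (2*a*h)" using a h by simp
      also have "\<dots> = a/(2*h) * x^2 + \<epsilon>^2/a * (h * y * y)/2 - \<epsilon> * x * y"
        using a h by (simp add: field_simps power2_eq_square)
      finally show ?thesis by simp
    qed
    have dd: "a/(2*h) * ((d i)^2 + (d (i-1))^2) = a/(2*h) * (d i)^2 + a/(2*h) * (d (i-1))^2"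
      by (simp add: distrib_left)
    show ?thesis unfolding g dd using amgm[of "d i" "u i"] amgm[of "d (i-1)" "u i"]
      unfolding T_def[symmetric] by (simp only: mult.assoc)
  qed
  have "2 * \<epsilon> * ip_h h M (grad_h h v) u = (\<Sum>i=1..M-1. 2 * \<epsilon> * (h * grad_h h v i * u i))"
    unfolding ip_h_def by (simp add: sum_distrib_left)
  also have "\<dots> \<le> (\<Sum>i=1..M-1. a/(2*h) * ((d i)^2 + (d (i-1))^2) + \<epsilon>^2/a * (h * u i * u i))"
    by (intro sum_mono pt) auto
  also have "\<dots> = a/(2*h) * ((\<Sum>i=1..M-1. (d i)^2) + (\<Sum>i=1..M-1. (d (i-1))^2)) + \<epsilon>^2/a * ip_h h M u u"
    unfolding ip_h_def by (simp add: sum.distrib sum_distrib_left sum_divide_distrib distrib_left)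
  also have "\<dots> \<le> a/(2*h) * ((\<Sum>i<M. (d i)^2) + (\<Sum>i<M. (d i)^2)) + \<epsilon>^2/a * ip_h h M u u"
  proof -
    have "(\<Sum>i=1..M-1. (d i)^2) \<le> (\<Sum>i<M. (d i)^2)" by (intro sum_mono2) auto
    moreover have "(\<Sum>i=1..M-1. (d (i-1))^2) \<le> (\<Sum>i<M. (d i)^2)"
      by (rule shift_sum_le) simp
    ultimately show ?thesis using a h by (intro add_right_mono mult_left_mono) auto
  qed
  also have "\<dots> = a * Aform h M v v + \<epsilon>^2 / a * ip_h h M u u"
    unfolding Aform_def d_def using h by (simp add: sum_divide_distrib[symmetric] power2_eq_square)
  finally show ?thesis .
qed

lemma cross_pt:
  fixes q \<tau>' d e :: real
  assumes q: "q > 0" and tp: "\<tau>' > 0"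
  shows "2 * (- (q^4) / ((q^2*\<tau>') * (1 + q^2))) * d * e
     \<ge> - (q^2 * q / (1 + q^2) / (q^2*\<tau>')) * d^2 - (q^2 * q / (1 + q^2) / \<tau>') * e^2"
proof -
  have p: "1 + q^2 > 0" by (metis add_pos_nonneg zero_less_one zero_le_power2)
  have e1: "q^4/((q^2*\<tau>')*(1+q^2)) = q^2/(\<tau>'*(1+q^2))"
    using q by (simp add: power2_eq_square power4_eq_xxxx)
  have e2: "q^2*q/(1+q^2)/(q^2*\<tau>') = q/(\<tau>'*(1+q^2))"
    using q by (simp add: power2_eq_square)
  have e3: "q^2*q/(1+q^2)/\<tau>' = q^3/(\<tau>'*(1+q^2))"
    by (simp add: power2_eq_square power3_eq_cube)
  have "0 \<le> q * (d - q*e)^2 / (\<tau>' * (1+q^2))" using q tp p by simp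
  also have "\<dots> = (2 * (- (q^2)) * d * e + q * d^2 + q^3 * e^2) / (\<tau>' * (1+q^2))"
    by (simp add: power2_eq_square power3_eq_cube algebra_simps)
  also have "\<dots> = 2 * (- (q^2) / (\<tau>' * (1+q^2))) * d * e + q / (\<tau>' * (1+q^2)) * d^2 + q^3 / (\<tau>' * (1+q^2)) * e^2"
    by (simp add: add_divide_distrib diff_divide_distrib)
  finally show ?thesis unfolding e1 e2 e3 minus_divide_left[symmetric] by simp
qed


lemma Aform_nonneg: "h > 0 \<Longrightarrow> 0 \<le> Aform h M v v"
  unfolding Aform_def by (intro sum_nonneg) simp

lemma Aform_scale: "Aform h M v (\<lambda>i. \<beta> * v i) = \<beta> * Aform h M v v"
  unfolding Aform_def Dfw_def by (simp add: sum_distrib_left algebra_simps)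

lemma Aform_cross:
  assumes h: "h > 0" and r: "r > 0" and tp: "\<tau>' > 0" and tau: "\<tau> = r * \<tau>'"
    and b1: "b1 = - (r^2) / (\<tau> * (1 + r))" and f: "f = r * sqrt r / (1 + r)"
  shows "(2*b0 - f/\<tau>) * Aform h M v v - f/\<tau>' * Aform h M w w
     \<le> 2 * Aform h M v (\<lambda>i. b0 * v i + b1 * w i)"
proof -
  define q where "q = sqrt r"
  have q: "q > 0" using r unfolding q_def by simp
  have rq: "r = q^2" unfolding q_def using r by simp
  have fq: "f = q^2 * q / (1 + q^2)" unfolding f rq q_def[symmetric] using q by simp
  have b1q: "b1 = - (q^4) / ((q^2*\<tau>') * (1 + q^2))" unfolding b1 tau rq
    by (simp add: power2_eq_square power4_eq_xxxx)
  have tq: "\<tau> = q^2 * \<tau>'" using tau rq by simp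
  have "(2*b0 - f/\<tau>) * Aform h M v v - f/\<tau>' * Aform h M w w
      = (\<Sum>i<M. ((2*b0 - f/\<tau>) * (Dfw v i)^2 - f/\<tau>' * (Dfw w i)^2) / h)"
    unfolding Aform_def by (simp add: sum_distrib_left sum_subtractf diff_divide_distrib power2_eq_square)
  also have "\<dots> \<le> (\<Sum>i<M. (2 * b0 * (Dfw v i)^2 + 2 * b1 * Dfw v i * Dfw w i) / h)"
  proof (intro sum_mono divide_right_mono)
    fix i
    show "(2*b0 - f/\<tau>) * (Dfw v i)^2 - f/\<tau>' * (Dfw w i)^2 \<le> 2 * b0 * (Dfw v i)^2 + 2 * b1 * Dfw v i * Dfw w i"
      using cross_pt[OF q tp, of "Dfw v i" "Dfw w i"] unfolding fq b1q tq[symmetric]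
      by (simp add: algebra_simps)
  qed (use h in simp)
  also have "\<dots> = 2 * Aform h M v (\<lambda>i. b0 * v i + b1 * w i)"
    unfolding Aform_def Dfw_def by (simp add: sum_distrib_left power2_eq_square algebra_simps add_divide_distrib)
  finally show ?thesis .
qed

lemma scalar_ind:
  fixes Q P \<tau> :: "nat \<Rightarrow> real" and c F :: real and n :: nat
  assumes n: "2 \<le> n" and F0: "0 \<le> F" and P0: "\<And>k. 2 \<le> k \<Longrightarrow> k \<le> n \<Longrightarrow> 0 \<le> P k"
    and tp: "\<And>k. 2 \<le> k \<Longrightarrow> k \<le> n \<Longrightarrow> 0 < \<tau> k"
    and Q2: "(c+F)/\<tau> 2 * P 2 \<le> Q 2"
    and Qk: "\<And>k. 3 \<le> k \<Longrightarrow> k \<le> n \<Longrightarrow> (c+F)/\<tau> k * P k - F/\<tau> (k-1) * P (k-1) \<le> Q k"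
  shows "(\<Sum>k=2..n. c/\<tau> k * P k) \<le> (\<Sum>k=2..n. Q k)"
proof -
  have main: "m \<le> n \<Longrightarrow> (\<Sum>k=2..m. c/\<tau> k * P k) + F/\<tau> m * P m \<le> (\<Sum>k=2..m. Q k)" if "2 \<le> m" for m
    using that
  proof (induction m rule: nat_induct_at_least)
    case base
    have "c/\<tau> 2 * P 2 + F/\<tau> 2 * P 2 = (c+F)/\<tau> 2 * P 2" by (simp add: add_divide_distrib distrib_right)
    then show ?case using Q2 by simp
  next
    case (Suc m)
    have IH: "(\<Sum>k=2..m. c/\<tau> k * P k) + F/\<tau> m * P m \<le> (\<Sum>k=2..m. Q k)" using Suc by simp
    have q: "(c+F)/\<tau> (Suc m) * P (Suc m) - F/\<tau> m * P m \<le> Q (Suc m)"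
      using Qk[of "Suc m"] Suc by simp
    have "c/\<tau> (Suc m) * P (Suc m) + F/\<tau> (Suc m) * P (Suc m) = (c+F)/\<tau> (Suc m) * P (Suc m)"
      by (simp add: add_divide_distrib distrib_right)
    then show ?case using IH q Suc by simp
  qed
  have "0 \<le> F/\<tau> n * P n" using F0 P0[of n] tp[of n] n by simp
  then show ?thesis using main[OF n] by simp
qed

theorem mainTheorem8:
  fixes t :: "nat \<Rightarrow> real" and N :: nat and T :: real
    and theta :: "nat \<Rightarrow> nat \<Rightarrow> real"
    and \<delta> \<epsilon> h :: real and M n :: nat
    and u :: "nat \<Rightarrow> nat \<Rightarrow> real"
  assumes t0: "t 0 = 0" and tN: "t N = T"
    and mono: "\<And>k. 1 \<le> k \<Longrightarrow> k \<le> N \<Longrightarrow> t (k - 1) < t k"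
    and delta: "0 < \<delta>" "\<delta> < r_max"
    and r2: "ratio t 2 > 0"
    and rk: "\<And>k. 3 \<le> k \<Longrightarrow> k \<le> N \<Longrightarrow> 0 < ratio t k \<and> ratio t k \<le> r_max - \<delta>"
    and doc: "\<And>m k. 1 \<le> k \<Longrightarrow> k \<le> m \<Longrightarrow> m \<le> N \<Longrightarrow>
               (\<Sum>j = k..m. theta m (m - j) * bdf2 t j (j - k)) = (if m = k then 1 else 0)"
    and eps: "\<epsilon> > 0"
    and h: "h > 0"
    and n: "2 \<le> n" "n \<le> N"
    and bc: "\<And>k. 1 \<le> k \<Longrightarrow> k \<le> n \<Longrightarrow> u k 0 = 0 \<and> u k M = 0"
  shows "2 * (\<Sum>k = 2..n. \<Sum>j = 2..k. theta k (k - j) *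
              ip_h h M (\<lambda>i. - lap_h h (u j) i) (u k))
         + \<epsilon>^2 / (C_r * \<delta>) * (\<Sum>k = 2..n. tau t k * (norm_h h M (u k))^2)
         \<ge> 2 * \<epsilon> * (\<Sum>k = 2..n. \<Sum>j = 2..k. theta k (k - j) *
              ip_h h M (grad_h h (u j)) (u k))"
proof -
  obtain R :: real where R1: "2.2 \<le> R" and R2: "R \<le> 2.21" and R3: "R^3 = 2*R^2+1"
    and Rr: "r_max = R^2" and RC: "C_r = R/(1+R^2)^2"
    using rmax_facts by blast
  define s where "s = r_max - \<delta>"
  define c where "c = C_r * \<delta>"
  define F where "F = s * sqrt s / (1 + s)"
  have dR: "\<delta> < R^2" using delta(2) Rr by simp
  have sR: "s = R^2 - \<delta>" using s_def Rr by simp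
  have cR: "c = R/(1+R^2)^2 * \<delta>" using c_def RC by simp
  note K = consts_key[OF R1 R2 R3 delta(1) dR sR cR F_def]
  have c0: "c > 0" and F0: "0 \<le> F" and K1: "c + F \<le> 2"
    and K2: "\<And>r. 0 < r \<Longrightarrow> r \<le> s \<Longrightarrow> c + F \<le> 2*(1+2*r)/(1+r) - r * sqrt r/(1+r)"
    and K3: "\<And>\<rho>. 0 < \<rho> \<Longrightarrow> \<rho> \<le> s \<Longrightarrow> \<rho> * sqrt \<rho>/(1+\<rho>) \<le> F"
    using K by auto
  have tpos: "tau t k > 0" if "1 \<le> k" "k \<le> N" for k
    using mono[OF that] unfolding tau_def by simp
  have rpos: "ratio t k > 0" if "2 \<le> k" "k \<le> N" for k
    using r2 rk[of k] that by (cases "k = 2") auto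
  have rle: "ratio t k \<le> s" if "3 \<le> k" "k \<le> N" for k
    using rk[OF that] unfolding s_def by simp
  have taurel: "tau t k = ratio t k * tau t (k-1)" if "2 \<le> k" "k \<le> N" for k
  proof -
    have "tau t (k-1) > 0" using tpos[of "k-1"] that by simp
    then show ?thesis unfolding ratio_def by simp
  qed
  have b0f: "bdf2 t k 0 = (1+2*ratio t k)/(tau t k*(1+ratio t k))" if "2 \<le> k" for k
    using that unfolding bdf2_def by simp
  have b1f: "bdf2 t k 1 = -((ratio t k)^2)/(tau t k*(1+ratio t k))" if "2 \<le> k" for k
    using that unfolding bdf2_def by simp
  have bz: "bdf2 t k j = 0" if "2 \<le> j" for k j
    using that unfolding bdf2_def by simp
  have b0pos: "bdf2 t k 0 > 0" if "1 \<le> k" "k \<le> N" for k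
  proof (cases "k = 1")
    case True then show ?thesis using tpos[of 1] that unfolding bdf2_def by simp
  next
    case False
    then have k2: "2 \<le> k" using that by simp
    show ?thesis unfolding b0f[OF k2] using rpos[OF k2 that(2)] tpos[OF that] by simp
  qed
  have rec: "theta m (m-l) * bdf2 t l 0 + theta m (m - Suc l) * bdf2 t (Suc l) 1 = 0"
    if "1 \<le> l" "l < m" "m \<le> N" for m l
  proof -
    have d: "(\<Sum>j = l..m. theta m (m - j) * bdf2 t j (j - l)) = 0"
      using doc[of l m] that by simp
    have z: "(\<Sum>j = Suc (Suc l)..m. theta m (m - j) * bdf2 t j (j - l)) = 0"
      by (intro sum.neutral) (auto simp: bz)
    have "(\<Sum>j = l..m. theta m (m - j) * bdf2 t j (j - l))
        = theta m (m-l) * bdf2 t l 0 + (theta m (m - Suc l) * bdf2 t (Suc l) 1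
          + (\<Sum>j = Suc (Suc l)..m. theta m (m - j) * bdf2 t j (j - l)))"
      using that by (simp add: sum.atLeast_Suc_atMost)
    then show ?thesis using d z by simp
  qed
  have diag: "theta m 0 * bdf2 t m 0 = 1" if "1 \<le> m" "m \<le> N" for m
    using doc[of m m] that by simp
  have Eq: "bdf2 t k 0 * theta k (k-l) + bdf2 t k 1 * theta (k-1) (k-1-l) = 0"
    if k: "2 \<le> k" "k \<le> N" and l: "1 \<le> l" "l < k" for k l
  proof -
    define E where "E = (\<lambda>l. bdf2 t k 0 * theta k (k-l) + bdf2 t k 1 * theta (k-1) (k-1-l))"
    have "l \<le> k - 1" using l by simp
    then have "1 \<le> l \<longrightarrow> E l = 0"
    proof (induction l rule: inc_induct)
      case base
      have r1: "theta k 1 * bdf2 t (k-1) 0 + theta k 0 * bdf2 t k 1 = 0"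
        using rec[of "k-1" k] k by simp
      have d1: "theta k 0 * bdf2 t k 0 = 1" using diag[of k] k by simp
      have d2: "theta (k-1) 0 * bdf2 t (k-1) 0 = 1" using diag[of "k-1"] k by simp
      have r1': "theta k 1 * bdf2 t (k-1) 0 = - (theta k 0 * bdf2 t k 1)" using r1 by linarith
      have "bdf2 t (k-1) 0 * E (k-1) = bdf2 t k 0 * (theta k 1 * bdf2 t (k-1) 0)
           + bdf2 t k 1 * (theta (k-1) 0 * bdf2 t (k-1) 0)"
        unfolding E_def using k by (simp add: algebra_simps numeral_2_eq_2)
      also have "\<dots> = bdf2 t k 0 * (- (theta k 0 * bdf2 t k 1)) + bdf2 t k 1 * 1"
        unfolding r1' d2 by simp
      also have "\<dots> = - bdf2 t k 1 * (theta k 0 * bdf2 t k 0) + bdf2 t k 1"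
        by (simp add: algebra_simps)
      also have "\<dots> = 0" using d1 by simp
      finally have "bdf2 t (k-1) 0 * E (k-1) = 0" .
      moreover have "bdf2 t (k-1) 0 > 0" using b0pos[of "k-1"] k by simp
      ultimately show ?case by simp
    next
      case (step m)
      have Em: "E (Suc m) = 0" using step by simp
      show ?case
      proof
        assume m1: "1 \<le> m"
        have r1: "theta k (k-m) * bdf2 t m 0 = - (theta k (k - Suc m) * bdf2 t (Suc m) 1)"
          using rec[of m k] m1 step k by (simp add: eq_neg_iff_add_eq_0)
        have r2: "theta (k-1) (k-1-m) * bdf2 t m 0 = - (theta (k-1) (k-1 - Suc m) * bdf2 t (Suc m) 1)"
          using rec[of m "k-1"] m1 step k by (simp add: eq_neg_iff_add_eq_0)
        have "bdf2 t m 0 * E m = bdf2 t k 0 * (theta k (k-m) * bdf2 t m 0)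
            + bdf2 t k 1 * (theta (k-1) (k-1-m) * bdf2 t m 0)"
          unfolding E_def by (simp add: algebra_simps)
        also have "\<dots> = - bdf2 t (Suc m) 1 * E (Suc m)"
          unfolding r1 r2 E_def by (simp add: algebra_simps)
        also have "\<dots> = 0" using Em by simp
        finally have "bdf2 t m 0 * E m = 0" .
        moreover have "bdf2 t m 0 > 0" using b0pos[of m] m1 step k by simp
        ultimately show "E m = 0" by simp
      qed
    qed
    then show ?thesis using l unfolding E_def by simp
  qed
  define W where "W = (\<lambda>k i. \<Sum>j=2..k. theta k (k-j) * u j i)"
  have urel: "u k i = bdf2 t k 0 * W k i + bdf2 t k 1 * W (k-1) i" if k: "3 \<le> k" "k \<le> n" for k i
  proof -
    obtain k' where k': "k = Suc k'" using k by (cases k) auto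
    have k2: "2 \<le> k'" using k k' by simp
    have "bdf2 t k 0 * W k i = (\<Sum>j=2..k'. bdf2 t k 0 * theta k (k-j) * u j i) + (theta k 0 * bdf2 t k 0) * u k i"
      unfolding W_def k' using k2 by (simp add: sum_distrib_left algebra_simps)
    also have "\<dots> = (\<Sum>j=2..k'. bdf2 t k 0 * theta k (k-j) * u j i) + u k i"
      using diag[of k] k n by simp
    finally have A: "bdf2 t k 0 * W k i = (\<Sum>j=2..k'. bdf2 t k 0 * theta k (k-j) * u j i) + u k i" .
    have B: "bdf2 t k 1 * W (k-1) i = (\<Sum>j=2..k'. bdf2 t k 1 * theta (k-1) (k-1-j) * u j i)"
      unfolding W_def k' by (simp add: sum_distrib_left algebra_simps)
    have C: "(\<Sum>j=2..k'. bdf2 t k 0 * theta k (k-j) * u j i) + (\<Sum>j=2..k'. bdf2 t k 1 * theta (k-1) (k-1-j) * u j i) = 0"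
      unfolding sum.distrib[symmetric]
    proof (intro sum.neutral ballI)
      fix j assume j: "j \<in> {2..k'}"
      have "bdf2 t k 0 * theta k (k-j) + bdf2 t k 1 * theta (k-1) (k-1-j) = 0"
        using Eq[of k j] j k k' n by simp
      then show "bdf2 t k 0 * theta k (k-j) * u j i + bdf2 t k 1 * theta (k-1) (k-1-j) * u j i = 0"
        by (metis distrib_right mult.assoc mult_zero_left)
    qed
    show ?thesis using A B C by simp
  qed
  have u2rel: "u 2 i = bdf2 t 2 0 * W 2 i" for i
    using diag[of 2] n unfolding W_def by (simp add: algebra_simps)
  have Wbc: "W k 0 = 0 \<and> W k M = 0" if "k \<le> n" for k
    unfolding W_def using bc that by (auto intro!: sum.neutral)
  have lapW: "lap_h h (W k) i = (\<Sum>j=2..k. theta k (k-j) * lap_h h (u j) i)" for k i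
  proof -
    have "(\<Sum>j=2..k. theta k (k-j) * lap_h h (u j) i)
        = (\<Sum>j=2..k. theta k (k-j) * (u j (i+1) - 2 * u j i + u j (i-1))) / h^2"
      unfolding lap_h_def sum_divide_distrib by simp
    also have "\<dots> = lap_h h (W k) i"
      unfolding lap_h_def W_def by (simp add: sum.distrib sum_subtractf sum_distrib_left algebra_simps)
    finally show ?thesis by simp
  qed
  have gradW: "grad_h h (W k) i = (\<Sum>j=2..k. theta k (k-j) * grad_h h (u j) i)" for k i
  proof -
    have "(\<Sum>j=2..k. theta k (k-j) * grad_h h (u j) i)
        = (\<Sum>j=2..k. theta k (k-j) * (u j (i+1) - u j (i-1))) / (2*h)"
      unfolding grad_h_def sum_divide_distrib by simp
    also have "\<dots> = grad_h h (W k) i"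
      unfolding grad_h_def W_def by (simp add: sum.distrib sum_subtractf sum_distrib_left algebra_simps)
    finally show ?thesis by simp
  qed
  have linG: "(\<Sum>j = 2..k. theta k (k - j) * ip_h h M (g j) w)
       = ip_h h M (\<lambda>i. \<Sum>j=2..k. theta k (k-j) * g j i) w" for k g w
  proof -
    have "(\<Sum>j = 2..k. theta k (k - j) * ip_h h M (g j) w)
        = (\<Sum>j = 2..k. \<Sum>i=1..M-1. theta k (k - j) * (h * g j i * w i))"
      unfolding ip_h_def by (simp add: sum_distrib_left)
    also have "\<dots> = (\<Sum>i=1..M-1. \<Sum>j = 2..k. theta k (k - j) * (h * g j i * w i))"
      by (rule sum.swap)
    also have "\<dots> = ip_h h M (\<lambda>i. \<Sum>j=2..k. theta k (k-j) * g j i) w"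
      unfolding ip_h_def by (simp add: sum_distrib_left sum_distrib_right algebra_simps)
    finally show ?thesis .
  qed
  have lin1: "(\<Sum>j = 2..k. theta k (k - j) * ip_h h M (\<lambda>i. - lap_h h (u j) i) (u k))
       = ip_h h M (\<lambda>i. - lap_h h (W k) i) (u k)" for k
    unfolding linG lapW by (simp add: sum_negf)
  have lin2: "(\<Sum>j = 2..k. theta k (k - j) * ip_h h M (grad_h h (u j)) (u k))
       = ip_h h M (grad_h h (W k)) (u k)" for k
  proof -
    have "grad_h h (W k) = (\<lambda>i. \<Sum>j=2..k. theta k (k-j) * grad_h h (u j) i)"
      by (rule ext, rule gradW)
    then show ?thesis using linG[of k "\<lambda>j. grad_h h (u j)" "u k"] by simp
  qed
  define P where "P = (\<lambda>k. Aform h M (W k) (W k))"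
  define U where "U = (\<lambda>k. ip_h h M (u k) (u k))"
  define Q where "Q = (\<lambda>k. 2 * ip_h h M (\<lambda>i. - lap_h h (W k) i) (u k))"
  define Rg where "Rg = (\<lambda>k. 2 * \<epsilon> * ip_h h M (grad_h h (W k)) (u k))"
  have P0: "0 \<le> P k" for k unfolding P_def using Aform_nonneg[OF h] by simp
  have U0: "0 \<le> U k" for k unfolding U_def ip_h_def using h
    by (intro sum_nonneg) (simp add: mult.assoc)
  have Qa: "Q k = 2 * Aform h M (W k) (u k)" if "2 \<le> k" "k \<le> n" for k
    unfolding Q_def using sbp[OF h, where w="u k" and v="W k" and M=M] bc[of k] that by simp
  have Q2: "(c+F)/tau t 2 * P 2 \<le> Q 2"
  proof -
    have "u 2 = (\<lambda>i. bdf2 t 2 0 * W 2 i)" using u2rel by auto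
    then have "Q 2 = 2 * bdf2 t 2 0 * P 2" using Qa[of 2] n unfolding P_def
      by (simp add: Aform_scale)
    moreover have "(c+F)/tau t 2 \<le> 2 * bdf2 t 2 0"
    proof -
      have t2: "tau t 2 > 0" using tpos[of 2] n by simp
      have r: "ratio t 2 > 0" using r2 .
      have "2 \<le> 2 * (1 + 2 * ratio t 2) / (1 + ratio t 2)" using r by (simp add: field_simps)
      then have "c + F \<le> 2 * (1 + 2 * ratio t 2) / (1 + ratio t 2)" using K1 by linarith
      then have "(c+F)/tau t 2 \<le> 2 * (1 + 2 * ratio t 2) / (1 + ratio t 2) / tau t 2"
        using t2 by (intro divide_right_mono) auto
      then show ?thesis unfolding b0f[of 2, simplified] by (simp add: field_simps)
    qed
    ultimately show ?thesis using P0[of 2] mult_right_mono by metis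
  qed
  have Qk: "(c+F)/tau t k * P k - F/tau t (k-1) * P (k-1) \<le> Q k" if k: "3 \<le> k" "k \<le> n" for k
  proof -
    have k2: "2 \<le> k" "k \<le> N" using k n by auto
    define r where "r = ratio t k"
    define f where "f = r * sqrt r / (1 + r)"
    have r0: "r > 0" unfolding r_def using rpos k2 by simp
    have rs: "r \<le> s" unfolding r_def using rle k n by simp
    have tp: "tau t (k-1) > 0" using tpos[of "k-1"] k n by simp
    have tk: "tau t k > 0" using tpos[of k] k n by simp
    have "u k = (\<lambda>i. bdf2 t k 0 * W k i + bdf2 t k 1 * W (k-1) i)" using urel k by auto
    then have Qe: "Q k = 2 * Aform h M (W k) (\<lambda>i. bdf2 t k 0 * W k i + bdf2 t k 1 * W (k-1) i)"
      using Qa k2 k by simp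
    have cr: "(2 * bdf2 t k 0 - f / tau t k) * P k - f / tau t (k-1) * P (k-1) \<le> Q k"
      unfolding Qe P_def
      by (rule Aform_cross[OF h r0 tp]) (use taurel[OF k2] b1f[OF k2(1)] in \<open>simp_all add: r_def f_def\<close>)
    have "c + F \<le> 2*(1+2*r)/(1+r) - f" using K2[OF r0 rs] unfolding f_def by (simp add: diff_divide_distrib)
    then have "(c+F)/tau t k \<le> (2*(1+2*r)/(1+r) - f)/tau t k" using tk by (simp add: divide_right_mono)
    also have "\<dots> = 2 * bdf2 t k 0 - f / tau t k" unfolding b0f[OF k2(1)] r_def[symmetric]
      using tk r0 by (simp add: diff_divide_distrib)
    finally have a1: "(c+F)/tau t k * P k \<le> (2 * bdf2 t k 0 - f / tau t k) * P k"
      using P0[of k] mult_right_mono by metis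
    have "f \<le> F" unfolding f_def using K3[OF r0 rs] .
    then have a2: "f / tau t (k-1) * P (k-1) \<le> F / tau t (k-1) * P (k-1)"
      using tp P0[of "k-1"] by (intro mult_right_mono divide_right_mono) auto
    show ?thesis using cr a1 a2 by linarith
  qed
  have SQ: "(\<Sum>k=2..n. c / tau t k * P k) \<le> (\<Sum>k=2..n. Q k)"
    by (rule scalar_ind[OF n(1) F0 P0 _ Q2 Qk]) (use tpos n in auto)
  have SR: "(\<Sum>k=2..n. Rg k) \<le> (\<Sum>k=2..n. c / tau t k * P k + \<epsilon>^2 / (c / tau t k) * U k)"
  proof (intro sum_mono)
    fix k assume "k \<in> {2..n}"
    then have "tau t k > 0" using tpos[of k] n by auto
    then have "c / tau t k > 0" using c0 by simp
    then show "Rg k \<le> c / tau t k * P k + \<epsilon>^2 / (c / tau t k) * U k"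
      unfolding Rg_def P_def U_def by (rule grad_bound[OF h])
  qed
  have LHS1: "2 * (\<Sum>k = 2..n. \<Sum>j = 2..k. theta k (k - j) * ip_h h M (\<lambda>i. - lap_h h (u j) i) (u k))
      = (\<Sum>k=2..n. Q k)"
    unfolding lin1 Q_def by (simp add: sum_distrib_left)
  have LHS2: "\<epsilon>^2 / (C_r * \<delta>) * (\<Sum>k = 2..n. tau t k * (norm_h h M (u k))^2)
      = (\<Sum>k=2..n. \<epsilon>^2 / (c / tau t k) * U k)"
    unfolding sum_distrib_left c_def[symmetric]
  proof (intro sum.cong refl)
    fix k
    have "(norm_h h M (u k))^2 = U k" unfolding norm_h_def using U0[of k] unfolding U_def by simp
    then show "\<epsilon>^2 / c * (tau t k * (norm_h h M (u k))^2) = \<epsilon>^2 / (c / tau t k) * U k" by simp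
  qed
  have RHS: "2 * \<epsilon> * (\<Sum>k = 2..n. \<Sum>j = 2..k. theta k (k - j) * ip_h h M (grad_h h (u j)) (u k))
      = (\<Sum>k=2..n. Rg k)"
    unfolding lin2 Rg_def by (simp add: sum_distrib_left)
  show ?thesis unfolding LHS1 LHS2 RHS using SQ SR by (simp add: sum.distrib)
qed

end
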